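(* Let $b,c,d$ be positive integers with $c/d\le b$, let $C$ be a non-empty set and $\|\cdot\|:\mathcal P(C)\setminus\{\emptyset\}\to\mathbb R_{\ge0}$. If $(C,\|\cdot\|)$ is $b$-big, then $(C,\|\cdot\|)$ is $(c,d)$-big.
   Context: $(C,\|\cdot\|)$ is $b$-big if for every non-empty $X\subseteq C$ and every colouring $\chi:X\to b$ there is a non-empty $Y\subseteq X$ on which $\chi$ is constant and $\|Y\|\ge\|X\|-1$. $(C,\|\cdot\|)$ is $(c,d)$-big if for every non-empty $X\subseteq C$ and every colouring $\chi:X\to c$ there is a non-empty $Y\subseteq X$ with $|\mathrm{ran}(\chi\restriction Y)|\le d$ and $\|Y\|\ge\|X\|-1$. *)

theory Defs
  imports Complex_Main
begin

text \<open>A colouring \<chi> : X \<rightarrow> b is a function with values in {0,...,b-1} on X.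
  The measure nm is only meaningful on non-empty subsets of C.\<close>

definition b_big :: "'a set \<Rightarrow> ('a set \<Rightarrow> real) \<Rightarrow> nat \<Rightarrow> bool" where
  "b_big C nm b \<longleftrightarrow>
     (\<forall>X \<chi>. X \<noteq> {} \<and> X \<subseteq> C \<and> (\<chi> :: 'a \<Rightarrow> nat) ` X \<subseteq> {..<b} \<longrightarrow>
        (\<exists>Y. Y \<noteq> {} \<and> Y \<subseteq> X \<and> (\<exists>i. \<forall>y\<in>Y. \<chi> y = i) \<and> nm Y \<ge> nm X - 1))"

definition cd_big :: "'a set \<Rightarrow> ('a set \<Rightarrow> real) \<Rightarrow> nat \<Rightarrow> nat \<Rightarrow> bool" where
  "cd_big C nm c d \<longleftrightarrow>
     (\<forall>X \<chi>. X \<noteq> {} \<and> X \<subseteq> C \<and> (\<chi> :: 'a \<Rightarrow> nat) ` X \<subseteq> {..<c} \<longrightarrow>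
        (\<exists>Y. Y \<noteq> {} \<and> Y \<subseteq> X \<and> card (\<chi> ` Y) \<le> d \<and> nm Y \<ge> nm X - 1))"

end

theory Submission
  imports Defs
begin

theorem lemma5p3:
  fixes b c d :: nat and C :: "'a set" and nm :: "'a set \<Rightarrow> real"
  assumes "b > 0" and "c > 0" and "d > 0"
    and "real c / real d \<le> real b"
    and "C \<noteq> {}"
    and "\<And>X. X \<subseteq> C \<Longrightarrow> X \<noteq> {} \<Longrightarrow> nm X \<ge> 0"
    and "b_big C nm b"
  shows "cd_big C nm c d"
proof -
  have cbd: "c \<le> b * d"
  proof -
    have "real c \<le> real b * real d" using assms(3,4) by (simp add: divide_le_eq)
    then show ?thesis by (metis of_nat_le_iff of_nat_mult)
  qed
  show ?thesis unfolding cd_big_def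
  proof (intro allI impI)
    fix X and \<chi> :: "'a \<Rightarrow> nat"
    assume H: "X \<noteq> {} \<and> X \<subseteq> C \<and> \<chi> ` X \<subseteq> {..<c}"
    have "(\<lambda>x. \<chi> x div d) ` X \<subseteq> {..<b}"
    proof
      fix z assume "z \<in> (\<lambda>x. \<chi> x div d) ` X"
      then obtain x where x: "x \<in> X" "z = \<chi> x div d" by auto
      have "\<chi> x < b * d" using H x cbd by fastforce
      then show "z \<in> {..<b}" using x assms(3)
        by (simp add: div_less_iff_less_mult)
    qed
    then have "X \<noteq> {} \<and> X \<subseteq> C \<and> (\<lambda>x. \<chi> x div d) ` X \<subseteq> {..<b}" using H by simp
    moreover have "\<forall>X \<psi>. X \<noteq> {} \<and> X \<subseteq> C \<and> (\<psi> :: 'a \<Rightarrow> nat) ` X \<subseteq> {..<b} \<longrightarrow>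
        (\<exists>Y. Y \<noteq> {} \<and> Y \<subseteq> X \<and> (\<exists>i. \<forall>y\<in>Y. \<psi> y = i) \<and> nm Y \<ge> nm X - 1)"
      using assms(7) unfolding b_big_def by simp
    ultimately have "\<exists>Y. Y \<noteq> {} \<and> Y \<subseteq> X \<and> (\<exists>i. \<forall>y\<in>Y. \<chi> y div d = i) \<and> nm Y \<ge> nm X - 1"
    proof -
      assume a: "X \<noteq> {} \<and> X \<subseteq> C \<and> (\<lambda>x. \<chi> x div d) ` X \<subseteq> {..<b}"
      assume "\<forall>X \<psi>. X \<noteq> {} \<and> X \<subseteq> C \<and> (\<psi> :: 'a \<Rightarrow> nat) ` X \<subseteq> {..<b} \<longrightarrow>
        (\<exists>Y. Y \<noteq> {} \<and> Y \<subseteq> X \<and> (\<exists>i. \<forall>y\<in>Y. \<psi> y = i) \<and> nm Y \<ge> nm X - 1)"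
      then have "X \<noteq> {} \<and> X \<subseteq> C \<and> (\<lambda>x. \<chi> x div d) ` X \<subseteq> {..<b} \<longrightarrow>
        (\<exists>Y. Y \<noteq> {} \<and> Y \<subseteq> X \<and> (\<exists>i. \<forall>y\<in>Y. \<chi> y div d = i) \<and> nm Y \<ge> nm X - 1)"
        by (rule spec[OF spec[of _ X]])
      then show ?thesis using a by (rule mp)
    qed
    then obtain Y i where Y: "Y \<noteq> {}" "Y \<subseteq> X" "\<forall>y\<in>Y. \<chi> y div d = i" "nm Y \<ge> nm X - 1"
      by blast
    have "\<chi> ` Y \<subseteq> {i*d..<i*d+d}"
    proof
      fix z assume "z \<in> \<chi> ` Y"
      then obtain y where y: "y \<in> Y" "z = \<chi> y" by auto
      have "z div d = i" using Y y by auto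
      have e: "z = i * d + z mod d" using \<open>z div d = i\<close> div_mult_mod_eq[of z d] by simp
      have "z mod d < d" using assms(3) by simp
      then show "z \<in> {i*d..<i*d+d}" using e by (simp only: atLeastLessThan_iff) linarith
    qed
    then have "card (\<chi> ` Y) \<le> d"
      using card_mono[of "{i*d..<i*d+d}"] by fastforce
    then show "\<exists>Y. Y \<noteq> {} \<and> Y \<subseteq> X \<and> card (\<chi> ` Y) \<le> d \<and> nm Y \<ge> nm X - 1"
      using Y by blast
  qed
qed

end
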